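(* For any real numbers $G_2,G_3$ with $G_2\neq0$ and $G_2^3-27G_3^2>0$, the polynomial $K^4-G_2K^2/2-G_3K-G_2^2/48$ has one real negative root, one real positive root, and two non-real complex conjugate roots. *)

theory Defs
  imports Complex_Main "HOL-Computational_Algebra.Polynomial"
begin

definition quartic :: "real \<Rightarrow> real \<Rightarrow> real poly" where
  "quartic G2 G3 = [: -(G2^2/48), -G3, -(G2/2), 0, 1 :]"

end

theory Submission imports Defs
begin

lemma crit_neg:
  fixes G2 G3 c :: real
  assumes "G2^3 - 27 * G3^2 > 0" "4*c^3 - G2*c - G3 = 0"
  shows "c^4 - G2/2*c^2 - G3*c - G2^2/48 < 0"
proof -
  have g3: "G2^3 > 0"
  proof -
    have "27 * G3^2 \<ge> 0" by simp
    thus ?thesis using assms(1) by linarith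
  qed
  have g: "G2 > 0"
  proof -
    have "G2^3 = G2 * G2^2" by (simp add: power2_eq_square power3_eq_cube)
    thus ?thesis using g3 by (simp add: zero_less_mult_iff)
  qed
  have e: "c^4 - G2/2*c^2 - G3*c - G2^2/48 = c/4*(4*c^3 - G2*c - G3) - (12*G2*c^2+36*G3*c+G2^2)/48"
    by (simp add: field_simps power2_eq_square power3_eq_cube power4_eq_xxxx)
  have "12*G2*(12*G2*c^2+36*G3*c+G2^2) = (12*G2*c+18*G3)^2 + 12*(G2^3-27*G3^2)"
    by (simp add: algebra_simps power2_eq_square power3_eq_cube)
  also have "\<dots> > 0" using assms(1) by (simp add: add_nonneg_pos)
  finally have "12*G2*c^2+36*G3*c+G2^2 > 0" using g by (simp add: zero_less_mult_iff)
  thus ?thesis using e assms(2) by simp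
qed
lemma no_three:
  fixes P K :: "real \<Rightarrow> real"
  assumes der: "\<And>x. DERIV P x :> K x"
    and crit: "\<And>c. K c = 0 \<Longrightarrow> P c < 0"
    and xyw: "x < y" "y < w" and r: "P x = 0" "P y = 0" "P w = 0"
  shows False
proof -
  have cont: "continuous_on {x..w} P"
    using der by (meson DERIV_isCont continuous_at_imp_continuous_on)
  obtain m where m: "m \<in> {x..w}" "\<And>t. t \<in> {x..w} \<Longrightarrow> P t \<le> P m"
    using continuous_attains_sup[OF compact_Icc _ cont] xyw by auto
  have "P m \<le> 0"
  proof (rule ccontr)
    assume pos: "\<not> P m \<le> 0"
    hence mi: "x < m" "m < w" using m(1) r by (auto simp: less_le)
    have "K m = 0"
    proof (rule DERIV_local_max[OF der, of "min (m-x) (w-m)"])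
      show "0 < min (m-x) (w-m)" using mi by simp
      show "\<forall>y. \<bar>m - y\<bar> < min (m - x) (w - m) \<longrightarrow> P y \<le> P m"
      proof (intro allI impI)
        fix t assume "\<bar>m - t\<bar> < min (m - x) (w - m)"
        hence "t \<in> {x..w}" by (auto simp: abs_less_iff)
        thus "P t \<le> P m" using m(2) by blast
      qed
    qed
    thus False using crit pos by fastforce
  qed
  have "K y = 0"
  proof (rule DERIV_local_max[OF der, of "min (y-x) (w-y)"])
    show "0 < min (y-x) (w-y)" using xyw by simp
    show "\<forall>t. \<bar>y - t\<bar> < min (y - x) (w - y) \<longrightarrow> P t \<le> P y"
    proof (intro allI impI)
      fix t assume "\<bar>y - t\<bar> < min (y - x) (w - y)"
      hence "t \<in> {x..w}" by (auto simp: abs_less_iff)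
      hence "P t \<le> P m" using m(2) by blast
      thus "P t \<le> P y" using \<open>P m \<le> 0\<close> r by linarith
    qed
  qed
  thus False using crit r by fastforce
qed

lemma map_poly_of_real_mult:
  fixes p q :: "real poly"
  shows "map_poly complex_of_real (p*q) = map_poly complex_of_real p * map_poly complex_of_real q"
  by (intro poly_eqI) (simp add: coeff_map_poly coeff_mult)

lemma test2:
  fixes z :: complex
  shows "[:-z,1:]*[:-cnj z,1:] = map_poly complex_of_real [: Re z ^2 + Im z^2, -2*Re z, 1:]"
  by (simp add: map_poly_pCons complex_eq_iff power2_eq_square)

theorem lemma23:
  fixes G2 G3 :: real
  assumes "G2 \<noteq> 0" and "G2^3 - 27 * G3^2 > 0"
  shows "\<exists>a b :: real. \<exists>z :: complex. a < 0 \<and> 0 < b \<and> Im z \<noteq> 0 \<and>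
           map_poly complex_of_real (quartic G2 G3) =
             [:- complex_of_real a, 1:] * [:- complex_of_real b, 1:] * [:- z, 1:] * [:- cnj z, 1:]"
proof -
  define P where "P = (\<lambda>x::real. x^4 - G2/2*x^2 - G3*x - G2^2/48)"
  define K where "K = (\<lambda>x::real. 4*x^3 - G2*x - G3)"
  have pq: "poly (quartic G2 G3) x = P x" for x
    by (simp add: quartic_def P_def algebra_simps power2_eq_square power3_eq_cube power4_eq_xxxx)
  have der: "DERIV P x :> K x" for x
    unfolding P_def K_def by (auto intro!: derivative_eq_intros simp: power2_eq_square power3_eq_cube)
  have crit: "K c = 0 \<Longrightarrow> P c < 0" for c
    using crit_neg[OF assms(2), of c] unfolding P_def K_def by simp
  define M where "M = 2*(1 + \<bar>G2\<bar> + \<bar>G3\<bar>)"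
  have M2: "M \<ge> 2" and MG2: "\<bar>G2\<bar> \<le> M/2" and MG3: "\<bar>G3\<bar> \<le> M/2" unfolding M_def by auto
  have Mbig: "P t > 0" if "\<bar>t\<bar> = M" for t
  proof -
    have t2: "t^2 = M^2" using that by (metis power2_abs)
    have "t^4 = t^2*t^2" by (simp add: power4_eq_xxxx power2_eq_square)
    hence t4: "t^4 = M^2*M^2" using t2 by simp
    have "\<bar>G2/2*t^2\<bar> = \<bar>G2\<bar>/2 * M^2" using t2 by (simp add: abs_mult)
    also have "\<dots> \<le> M/4 * M^2" using MG2 by (intro mult_right_mono) auto
    finally have "\<bar>G2/2*t^2\<bar> \<le> M/4 * M^2" .
    moreover have "\<bar>G3*t\<bar> \<le> M/2*M" using MG3 that M2 by (simp add: abs_mult mult_mono)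
    moreover have "G2^2/48 \<le> (M/2)^2/48"
    proof -
      have "\<bar>G2\<bar>^2 \<le> (M/2)^2" using MG2 by (intro power_mono) auto
      thus ?thesis by simp
    qed
    moreover have "M^2*M^2 - M/4*M^2 - M/2*M - (M/2)^2/48 > 0"
    proof -
      have "M^2*M^2 - M/4*M^2 - M/2*M - (M/2)^2/48 = M^2*(M^2 - M/4 - 1/2 - 1/192)"
        by (simp add: algebra_simps power2_eq_square)
      moreover have "M^2 - M/4 - 1/2 - 1/192 > 0"
      proof -
        have "M*M \<ge> 2*M" using M2 by (intro mult_right_mono) auto
        thus ?thesis using M2 unfolding power2_eq_square by linarith
      qed
      moreover have "M^2 > 0" using M2 by simp
      ultimately show ?thesis by simp
    qed
    ultimately show ?thesis unfolding P_def t4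
      using abs_ge_self[of "G2/2*t^2"] abs_ge_self[of "G3*t"] by linarith
  qed
  have P0: "P 0 < 0" using assms(1) by (simp add: P_def)
  obtain a where a: "-M < a" "a < 0" "P a = 0"
    using poly_IVT_neg[of "-M" 0 "quartic G2 G3"] Mbig[of "-M"] P0 M2 by (auto simp: pq)
  obtain b where b: "0 < b" "b < M" "P b = 0"
    using poly_IVT_pos[of 0 M "quartic G2 G3"] Mbig[of "M"] P0 M2 by (auto simp: pq)
  define u where "u = a + b"
  define v where "v = (a+b)^2 - a*b - G2/2"
  define c1 where "c1 = -(a+b)*v + a*b*u + G3"
  define c0 where "c0 = a*b*v + G2^2/48"
  have D: "(x-a)*(x-b)*(x^2+u*x+v) - P x = c1*x + c0" for x
    unfolding u_def v_def c1_def c0_def P_def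
    by (simp add: field_simps power2_eq_square power3_eq_cube power4_eq_xxxx)
  have "c1*a + c0 = 0" using D[of a] a by simp
  moreover have "c1*b + c0 = 0" using D[of b] b by simp
  moreover have "c1*(a-b) = (c1*a+c0) - (c1*b+c0)" by (simp add: algebra_simps)
  ultimately have "c1*(a-b) = 0" by linarith
  hence "c1 = 0" using a b by simp
  hence "c0 = 0" using \<open>c1*a + c0 = 0\<close> by simp
  have E1: "-(a+b)*v + a*b*u = -G3" using \<open>c1 = 0\<close> unfolding c1_def by simp
  have E2: "a*b*v = -(G2^2/48)" using \<open>c0 = 0\<close> unfolding c0_def by simp
  have Pf: "P x = (x-a)*(x-b)*(x^2+u*x+v)" for x
    using D[of x] \<open>c1 = 0\<close> \<open>c0 = 0\<close> by simp
  have fact: "quartic G2 G3 = [:-a,1:]*[:-b,1:]*[:v,u,1:]"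
  proof -
    have "poly (quartic G2 G3) = poly ([:-a,1:]*[:-b,1:]*[:v,u,1:])"
      by (rule ext) (simp add: pq Pf algebra_simps power2_eq_square)
    thus ?thesis by (simp add: poly_eq_poly_eq_iff)
  qed
  have Kf: "K x = (x-b)*(x^2+u*x+v) + (x-a)*((x^2+u*x+v) + (x-b)*(2*x+u))" for x
  proof -
    have "DERIV P x :> (x-b)*(x^2+u*x+v) + (x-a)*((x^2+u*x+v) + (x-b)*(2*x+u))"
      unfolding Pf by (auto intro!: derivative_eq_intros simp: power2_eq_square algebra_simps)
    thus ?thesis using der DERIV_unique by blast
  qed
  have disc: "u^2 < 4*v"
  proof (rule ccontr)
    assume "\<not> u^2 < 4*v"
    define r where "r = (-u + sqrt (u^2 - 4*v))/2"
    have "r^2 + u*r + v = 0"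
    proof -
      define s where "s = sqrt (u^2-4*v)"
      have s: "s^2 = u^2 - 4*v" using \<open>\<not> u^2 < 4*v\<close> unfolding s_def by simp
      have "r = (-u + s)/2" unfolding r_def s_def ..
      hence sr: "s = 2*r + u" by simp
      have "r^2 + u*r + v = (s^2 - u^2)/4 + v" unfolding sr by (simp add: field_simps power2_eq_square)
      thus ?thesis using s by simp
    qed
    hence Pr: "P r = 0" using Pf by simp
    show False
    proof (cases "r = a \<or> r = b")
      case True
      hence "K r = 0" using Kf[of r] \<open>r^2 + u*r + v = 0\<close> by auto
      thus False using crit Pr by fastforce
    next
      case False
      have ab: "a < b" using a b by simp
      have "r < a \<or> (a < r \<and> r < b) \<or> b < r" using False ab by auto
      moreover have "\<not> r < a" using no_three[OF der crit, of r a b] ab a(3) b(3) Pr by blast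
      moreover have "\<not> (a < r \<and> r < b)" using no_three[OF der crit, of a r b] a(3) b(3) Pr by blast
      moreover have "\<not> b < r" using no_three[OF der crit, of a b r] ab a(3) b(3) Pr by blast
      ultimately show False by blast
    qed
  qed
  define z where "z = Complex (-u/2) (sqrt (4*v - u^2)/2)"
  have zIm: "Im z \<noteq> 0" using disc unfolding z_def by simp
  have zq: "[:-z,1:]*[:-cnj z,1:] = map_poly complex_of_real [:v,u,1:]"
  proof -
    have "Re z ^2 + Im z^2 = v"
      using disc unfolding z_def by (simp add: power_divide real_sqrt_pow2 algebra_simps add_divide_distrib[symmetric])
    moreover have "-2*Re z = u" unfolding z_def by simp
    ultimately show ?thesis using test2[of z] by simp
  qed
  have "map_poly complex_of_real (quartic G2 G3) =
        [:- complex_of_real a, 1:] * [:- complex_of_real b, 1:] * map_poly complex_of_real [:v,u,1:]"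
    unfolding fact by (simp add: map_poly_of_real_mult map_poly_pCons)
  also have "\<dots> = [:- complex_of_real a, 1:] * [:- complex_of_real b, 1:] * [:- z, 1:] * [:- cnj z, 1:]"
    by (simp only: mult.assoc zq)
  finally show ?thesis using a b zIm by blast
qed

end
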